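(* Let $Z$ be a random variable with density $f$, CDF $F$ and $\overline F = 1-F$, satisfying: (a) continuous distribution with bounded density; (b) finite expectation; (c) support unbounded in the $+\infty$ direction; (d) the hazard rate $f(z)/\overline F(z)$ is eventually monotone. Then for every $\lambda>0$, the function $z\mapsto \overline F(z)e^{\lambda z}$ is eventually monotone.
   Context: A function $\phi$ is eventually monotone if there is $z_0\ge 0$ such that $\phi$ is non-decreasing on $(z_0,\infty)$ or non-increasing on $(z_0,\infty)$. *)

theory Defs
  imports "HOL-Probability.Probability"
begin

definition eventually_monotone :: "(real \<Rightarrow> real) \<Rightarrow> bool" where
  "eventually_monotone \<phi> \<longleftrightarrow>
     (\<exists>z0 \<ge> 0. mono_on {z0<..} \<phi> \<or> antimono_on {z0<..} \<phi>)"

end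

theory Submission
  imports Defs
begin

lemma iter_down:
  fixes \<phi> :: "real \<Rightarrow> real" and c z0 a b :: real and n :: nat
  assumes step: "\<And>x y. z0 < x \<Longrightarrow> x \<le> y \<Longrightarrow> \<phi> y * (1 + c*(y-x)) \<le> \<phi> x"
    and c: "c \<ge> 0" and a: "z0 < a" and ab: "a \<le> b" and n: "n > 0"
  shows "\<phi> b * (1 + c*(b-a)/n)^n \<le> \<phi> a"
proof -
  define d where "d = (b-a)/n"
  have d: "d \<ge> 0" using ab n by (simp add: d_def)
  have "\<phi> (a + real k * d) * (1 + c*d)^k \<le> \<phi> a" for k
  proof (induction k)
    case 0 then show ?case by simp
  next
    case (Suc k)
    have x: "z0 < a + real k * d" using a d by (smt (verit) mult_nonneg_nonneg of_nat_0_le_iff)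
    have "\<phi> (a + real (Suc k) * d) * (1 + c*d) \<le> \<phi> (a + real k * d)"
      using step[OF x, of "a + real (Suc k) * d"] d by (simp add: algebra_simps)
    then have "\<phi> (a + real (Suc k) * d) * (1 + c*d) * (1 + c*d)^k \<le> \<phi> (a + real k * d) * (1 + c*d)^k"
      using c d by (intro mult_right_mono) auto
    then show ?case using Suc by (simp add: algebra_simps)
  qed
  from this[of n] show ?thesis using n by (simp add: d_def)
qed

lemma iter_up:
  fixes \<phi> :: "real \<Rightarrow> real" and c z0 a b :: real and n :: nat
  assumes step: "\<And>x y. z0 < x \<Longrightarrow> x \<le> y \<Longrightarrow> \<phi> x * (1 - c*(y-x)) \<le> \<phi> y"
    and c: "c \<ge> 0" and a: "z0 < a" and ab: "a \<le> b" and n: "n > 0"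
    and small: "c*(b-a)/n \<le> 1"
  shows "\<phi> a * (1 + (- (c*(b-a)))/n)^n \<le> \<phi> b"
proof -
  define d where "d = (b-a)/n"
  have d: "d \<ge> 0" using ab n by (simp add: d_def)
  have cd: "c*d \<le> 1" using small by (simp add: d_def)
  have "\<phi> a * (1 - c*d)^k \<le> \<phi> (a + real k * d)" for k
  proof (induction k)
    case 0 then show ?case by simp
  next
    case (Suc k)
    have x: "z0 < a + real k * d" using a d by (smt (verit) mult_nonneg_nonneg of_nat_0_le_iff)
    have "\<phi> (a + real k * d) * (1 - c*d) \<le> \<phi> (a + real (Suc k) * d)"
      using step[OF x, of "a + real (Suc k) * d"] d by (simp add: algebra_simps)
    moreover have "\<phi> a * (1 - c*d)^k * (1 - c*d) \<le> \<phi> (a + real k * d) * (1 - c*d)"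
      using Suc cd by (intro mult_right_mono) auto
    ultimately show ?case by (simp add: algebra_simps)
  qed
  from this[of n] show ?thesis using n by (simp add: d_def)
qed

theorem lemma6:
  fixes M :: "'a measure" and Z :: "'a \<Rightarrow> real" and f :: "real \<Rightarrow> real"
    and F Fbar :: "real \<Rightarrow> real"
  assumes "prob_space M"
    and f_meas: "f \<in> borel_measurable lborel"
    and f_nonneg: "\<And>x. f x \<ge> 0"
    and density: "distributed M lborel Z (\<lambda>x. ennreal (f x))"
    and F_def: "\<And>z. F z = measure M {\<omega> \<in> space M. Z \<omega> \<le> z}"
    and Fbar_def: "\<And>z. Fbar z = 1 - F z"
    and bounded: "\<exists>B. \<forall>x. f x \<le> B"
    and finite_exp: "integrable M Z"
    and unbounded_support: "\<And>z. Fbar z > 0"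
    and hazard: "eventually_monotone (\<lambda>z. f z / Fbar z)"
    and lam: "(c::real) > 0"
  shows "eventually_monotone (\<lambda>z. Fbar z * exp (c * z))"
proof -
  interpret P: prob_space M by fact
  have Zm: "Z \<in> measurable M lborel" using density by (simp add: distributed_def)
  define S where "S a b = Z -` {a<..b} \<inter> space M" for a b
  have Ssets: "S a b \<in> sets M" for a b
    unfolding S_def by (rule measurable_sets[OF Zm]) simp
  have diff: "Fbar a - Fbar b = measure M (S a b)" if "a \<le> b" for a b
  proof -
    have sub: "{\<omega> \<in> space M. Z \<omega> \<le> a} \<subseteq> {\<omega> \<in> space M. Z \<omega> \<le> b}" using that by auto
    have eq: "S a b = {\<omega> \<in> space M. Z \<omega> \<le> b} - {\<omega> \<in> space M. Z \<omega> \<le> a}"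
      unfolding S_def by auto
    have m1: "{\<omega> \<in> space M. Z \<omega> \<le> a} \<in> sets M" for a
      using measurable_sets[OF Zm, of "{..a}"] by (simp add: vimage_def Int_def conj_commute)
    show ?thesis unfolding Fbar_def F_def eq
      using P.finite_measure_Diff[OF m1 m1 sub] by simp
  qed
  have em: "emeasure M (S a b) = (\<integral>\<^sup>+x. ennreal (f x) * indicator {a<..b} x \<partial>lborel)" for a b
    unfolding S_def by (rule distributed_emeasure[OF density]) simp
  have Fmono: "Fbar b \<le> Fbar a" if "a \<le> b" for a b
    using diff[OF that] measure_nonneg[of M "S a b"] by linarith
  have est1: "Fbar b * (1 + c*(b-a)) \<le> Fbar a"
    if ab: "a \<le> b" and h: "\<And>t. a < t \<Longrightarrow> t \<le> b \<Longrightarrow> c * Fbar t \<le> f t" for a b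
  proof -
    have Fb: "Fbar b \<ge> 0" using unbounded_support[of b] by simp
    have "(\<integral>\<^sup>+x. ennreal (c * Fbar b) * indicator {a<..b} x \<partial>lborel)
          \<le> (\<integral>\<^sup>+x. ennreal (f x) * indicator {a<..b} x \<partial>lborel)"
    proof (rule nn_integral_mono)
      fix x
      show "ennreal (c * Fbar b) * indicator {a<..b} x \<le> ennreal (f x) * indicator {a<..b} x"
      proof (cases "x \<in> {a<..b}")
        case True
        then have "c * Fbar b \<le> f x" using h[of x] Fmono[of x b] lam
          by (smt (verit) greaterThanAtMost_iff mult_left_mono)
        then show ?thesis using True by (simp add: ennreal_leI)
      qed simp
    qed
    also have "\<dots> = ennreal (measure M (S a b))" using em P.emeasure_eq_measure by metis
    finally have "ennreal (c * Fbar b * (b - a)) \<le> ennreal (measure M (S a b))"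
      using ab lam Fb by (simp add: nn_integral_cmult_indicator ennreal_mult)
    then have "c * Fbar b * (b - a) \<le> measure M (S a b)"
      by (simp add: ennreal_le_iff)
    then show ?thesis using diff[OF ab] by (simp add: algebra_simps)
  qed
  have est2: "Fbar a * (1 - c*(b-a)) \<le> Fbar b"
    if ab: "a \<le> b" and h: "\<And>t. a < t \<Longrightarrow> t \<le> b \<Longrightarrow> f t \<le> c * Fbar t" for a b
  proof -
    have Fa: "Fbar a \<ge> 0" using unbounded_support[of a] by simp
    have "(\<integral>\<^sup>+x. ennreal (f x) * indicator {a<..b} x \<partial>lborel)
          \<le> (\<integral>\<^sup>+x. ennreal (c * Fbar a) * indicator {a<..b} x \<partial>lborel)"
    proof (rule nn_integral_mono)
      fix x
      show "ennreal (f x) * indicator {a<..b} x \<le> ennreal (c * Fbar a) * indicator {a<..b} x"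
      proof (cases "x \<in> {a<..b}")
        case True
        then have "f x \<le> c * Fbar a" using h[of x] Fmono[of a x] lam
          by (smt (verit) greaterThanAtMost_iff mult_left_mono)
        then show ?thesis using True by (simp add: ennreal_leI)
      qed simp
    qed
    then have "ennreal (measure M (S a b)) \<le> ennreal (c * Fbar a * (b - a))"
      using em P.emeasure_eq_measure ab lam Fa
      by (simp add: nn_integral_cmult_indicator ennreal_mult)
    then have "measure M (S a b) \<le> c * Fbar a * (b - a)"
      using ab lam Fa by (simp add: ennreal_le_iff)
    then show ?thesis using diff[OF ab] by (simp add: algebra_simps)
  qed
  define G where "G z = Fbar z * exp (c * z)" for z
  have expab: "exp (c * b) = exp (c * (b - a)) * exp (c * a)" for a b
    by (simp add: exp_add[symmetric] algebra_simps)
  have down: "G b \<le> G a"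
    if z1: "z1 < a" and ab: "a \<le> b" and H: "\<And>t. z1 < t \<Longrightarrow> c * Fbar t \<le> f t" for z1 a b
  proof -
    have step: "Fbar y * (1 + c*(y-x)) \<le> Fbar x" if "z1 < x" "x \<le> y" for x y
      using est1[OF that(2)] H that(1) by force
    have lim: "(\<lambda>n. Fbar b * (1 + c*(b-a)/real n)^n) \<longlonglongrightarrow> Fbar b * exp (c*(b-a))"
      by (intro tendsto_mult tendsto_const tendsto_exp_limit_sequentially)
    have "Fbar b * exp (c*(b-a)) \<le> Fbar a"
    proof (rule LIMSEQ_le_const2[OF lim], intro exI[of _ 1] allI impI)
      fix n :: nat assume "1 \<le> n"
      then show "Fbar b * (1 + c*(b-a)/real n)^n \<le> Fbar a"
        using iter_down[of z1 Fbar c a b n, OF step] lam z1 ab by simp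
    qed
    then show ?thesis unfolding G_def expab[of b a]
      by (simp add: mult.assoc[symmetric] mult_right_mono)
  qed
  have up: "G a \<le> G b"
    if z1: "z1 < a" and ab: "a \<le> b" and H: "\<And>t. z1 < t \<Longrightarrow> f t \<le> c * Fbar t" for z1 a b
  proof -
    have step: "Fbar x * (1 - c*(y-x)) \<le> Fbar y" if "z1 < x" "x \<le> y" for x y
      using est2[OF that(2)] H that(1) by force
    have lim: "(\<lambda>n. Fbar a * (1 + (- (c*(b-a)))/real n)^n) \<longlonglongrightarrow> Fbar a * exp (- (c*(b-a)))"
      by (intro tendsto_mult tendsto_const tendsto_exp_limit_sequentially)
    have "Fbar a * exp (- (c*(b-a))) \<le> Fbar b"
    proof (rule LIMSEQ_le_const2[OF lim], intro exI[of _ "nat \<lceil>c*(b-a)\<rceil> + 1"] allI impI)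
      fix n :: nat assume n: "nat \<lceil>c*(b-a)\<rceil> + 1 \<le> n"
      then have n0: "n > 0" by simp
      have "c*(b-a) \<le> real n" using n by linarith
      then have "c*(b-a)/real n \<le> 1" using n0 by (simp add: divide_le_eq)
      then show "Fbar a * (1 + (- (c*(b-a)))/real n)^n \<le> Fbar b"
        using iter_up[of z1 Fbar c a b n, OF step] lam z1 ab n0 by simp
    qed
    from mult_right_mono[OF this, of "exp (c * (b - a)) * exp (c * a)"]
    have "Fbar a * (exp (- (c*(b-a))) * exp (c * (b - a))) * exp (c * a) \<le> Fbar b * exp (c * (b - a)) * exp (c * a)"
      by (simp add: mult.assoc)
    also have "exp (- (c*(b-a))) * exp (c * (b - a)) = 1" by (simp add: exp_add[symmetric])
    finally show ?thesis unfolding G_def expab[of b a] by (simp add: mult.assoc)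
  qed
  have hz: "(c \<le> f z / Fbar z) = (c * Fbar z \<le> f z)" "(f z / Fbar z \<le> c) = (f z \<le> c * Fbar z)" for z
    using unbounded_support[of z] by (simp_all add: pos_le_divide_eq pos_divide_le_eq mult.commute)
  from hazard obtain z0 where z0: "z0 \<ge> 0"
    and hm: "mono_on {z0<..} (\<lambda>z. f z / Fbar z) \<or> antimono_on {z0<..} (\<lambda>z. f z / Fbar z)"
    unfolding eventually_monotone_def by blast
  have "\<exists>z1\<ge>0. mono_on {z1<..} G \<or> antimono_on {z1<..} G"
    using hm
  proof
    assume m: "mono_on {z0<..} (\<lambda>z. f z / Fbar z)"
    show ?thesis
    proof (cases "\<exists>z1>z0. c \<le> f z1 / Fbar z1")
      case True
      then obtain z1 where z1: "z1 > z0" "c \<le> f z1 / Fbar z1" by blast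
      have H: "c * Fbar t \<le> f t" if "z1 < t" for t
        using monotone_onD[OF m, of z1 t] z1 that hz[of t] by auto
      have "antimono_on {z1<..} G"
        by (intro monotone_onI) (auto intro: down[OF _ _ H])
      then show ?thesis using z1 z0 by (intro exI[of _ z1]) auto
    next
      case False
      have H: "f t \<le> c * Fbar t" if "z0 < t" for t
        using False that hz[of t] by force
      have "mono_on {z0<..} G"
        by (intro monotone_onI) (auto intro: up[OF _ _ H])
      then show ?thesis using z0 by blast
    qed
  next
    assume m: "antimono_on {z0<..} (\<lambda>z. f z / Fbar z)"
    show ?thesis
    proof (cases "\<exists>z1>z0. f z1 / Fbar z1 \<le> c")
      case True
      then obtain z1 where z1: "z1 > z0" "f z1 / Fbar z1 \<le> c" by blast
      have H: "f t \<le> c * Fbar t" if "z1 < t" for t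
        using monotone_onD[OF m, of z1 t] z1 that hz[of t] by auto
      have "mono_on {z1<..} G"
        by (intro monotone_onI) (auto intro: up[OF _ _ H])
      then show ?thesis using z1 z0 by (intro exI[of _ z1]) auto
    next
      case False
      have H: "c * Fbar t \<le> f t" if "z0 < t" for t
        using False that hz[of t] by force
      have "antimono_on {z0<..} G"
        by (intro monotone_onI) (auto intro: down[OF _ _ H])
      then show ?thesis using z0 by blast
    qed
  qed
  then show ?thesis unfolding eventually_monotone_def G_def by simp
qed

end
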